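(* Let $k$ be an algebraically closed field of characteristic zero and let $(A,M)$ be a standard graded $k$-algebra, $A=A_0\oplus A_1\oplus\cdots$. If $A$ is not a principal ideal algebra, then the set $$\mathcal{E}=\{\,i\in\mathbb{N}\;:\;\text{there exist } N\ge 0 \text{ and a }k\text{-algebra homomorphism }\alpha:A\to k[t]/\langle t^{N+1}\rangle \text{ with } \dim_k\alpha(A_i)\ge 2\,\}$$ is finite and nonempty.
   Context: All algebras are commutative, unital and finite dimensional over $k$. A principal ideal algebra is a finite dimensional commutative $k$-algebra in which every ideal is principal. A finite dimensional non-negatively graded algebra $A=A_0\oplus A_1\oplus\cdots\oplus A_n$ is standard if $M=A_1\oplus\cdots\oplus A_n$ is a maximal ideal generated by elements of degree one. A truncated polynomial algebra is one of the form $k[t]/\langle t^{N+1}\rangle$. *)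

theory Defs
  imports "HOL-Computational_Algebra.Polynomial"
begin

definition alg_closed :: "'k::field itself \<Rightarrow> bool" where
  "alg_closed _ \<longleftrightarrow> (\<forall>p :: 'k poly. degree p \<ge> 1 \<longrightarrow> (\<exists>x. poly p x = 0))"

definition fd_algebra :: "('k::field \<Rightarrow> 'a::comm_ring_1 \<Rightarrow> 'a) \<Rightarrow> bool" where
  "fd_algebra scale \<longleftrightarrow>
     vector_space scale \<and>
     (\<forall>c x y. scale c (x * y) = scale c x * y) \<and>
     (\<exists>B. finite B \<and> module.span scale B = UNIV)"

definition is_ideal :: "'a::comm_ring_1 set \<Rightarrow> bool" where
  "is_ideal I \<longleftrightarrow> 0 \<in> I \<and> (\<forall>x\<in>I. \<forall>y\<in>I. x + y \<in> I) \<and> (\<forall>r. \<forall>x\<in>I. r * x \<in> I)"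

definition maximal_ideal :: "'a::comm_ring_1 set \<Rightarrow> bool" where
  "maximal_ideal M \<longleftrightarrow> is_ideal M \<and> M \<noteq> UNIV \<and>
     (\<forall>J. is_ideal J \<and> M \<subseteq> J \<longrightarrow> J = M \<or> J = UNIV)"

definition ideal_generated :: "'a::comm_ring_1 set \<Rightarrow> 'a set" where
  "ideal_generated S = \<Inter>{I. is_ideal I \<and> S \<subseteq> I}"

definition principal_ideal_ring :: "'a::comm_ring_1 itself \<Rightarrow> bool" where
  "principal_ideal_ring _ \<longleftrightarrow> (\<forall>I :: 'a set. is_ideal I \<longrightarrow> (\<exists>a. I = {r * a | r. True}))"

definition graded :: "('k::field \<Rightarrow> 'a::comm_ring_1 \<Rightarrow> 'a) \<Rightarrow> (nat \<Rightarrow> 'a set) \<Rightarrow> bool" where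
  "graded scale G \<longleftrightarrow>
     (\<forall>i. module.subspace scale (G i)) \<and>
     (\<forall>i j. \<forall>x\<in>G i. \<forall>y\<in>G j. x * y \<in> G (i + j)) \<and>
     (\<exists>n. (\<forall>i>n. G i = {0}) \<and>
          (\<forall>x. \<exists>!f. (\<forall>i. f i \<in> G i) \<and> x = (\<Sum>i\<le>n. f i)))"

definition irrelevant :: "(nat \<Rightarrow> 'a::comm_ring_1 set) \<Rightarrow> 'a set" where
  "irrelevant G = {x. \<exists>f m. (\<forall>i. f i \<in> G i) \<and> f 0 = 0 \<and> x = (\<Sum>i\<le>m. f i)}"

definition standard_graded :: "('k::field \<Rightarrow> 'a::comm_ring_1 \<Rightarrow> 'a) \<Rightarrow> (nat \<Rightarrow> 'a set) \<Rightarrow> bool" where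
  "standard_graded scale G \<longleftrightarrow> graded scale G \<and>
     maximal_ideal (irrelevant G) \<and> irrelevant G = ideal_generated (G 1)"

text \<open>k[t]/<t^(N+1)> is represented by canonical remainders modulo t^(N+1), i.e. polynomials
  of degree at most N, with multiplication followed by reduction mod t^(N+1).\<close>
definition trunc_hom :: "('k::field \<Rightarrow> 'a::comm_ring_1 \<Rightarrow> 'a) \<Rightarrow> nat \<Rightarrow> ('a \<Rightarrow> 'k poly) \<Rightarrow> bool" where
  "trunc_hom scale N \<alpha> \<longleftrightarrow>
     (\<forall>x. \<alpha> x mod [:0, 1:] ^ (N + 1) = \<alpha> x) \<and>
     (\<forall>x y. \<alpha> (x + y) = \<alpha> x + \<alpha> y) \<and>
     (\<forall>c x. \<alpha> (scale c x) = smult c (\<alpha> x)) \<and>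
     \<alpha> 1 = 1 \<and>
     (\<forall>x y. \<alpha> (x * y) = (\<alpha> x * \<alpha> y) mod [:0, 1:] ^ (N + 1))"

end

theory Submission
  imports Defs
begin

interpretation PV: vector_space "smult :: 'k::field \<Rightarrow> 'k poly \<Rightarrow> 'k poly"
  by unfold_locales (auto simp: smult_add_right smult_add_left)

lemma poly_prod_trunc:
  "([:a0,0,a2,a3:] * [:b0,0,b2,b3:] :: 'k::field poly) mod [:0,1:]^4 =
   [:a0*b0, 0, a0*b2+a2*b0, a0*b3+a3*b0:]"
proof -
  have e: "([:a0,0,a2,a3:] * [:b0,0,b2,b3:] :: 'k::field poly) =
    [:a0*b0, 0, a0*b2+a2*b0, a0*b3+a3*b0:] + [:0,1:]^4 * [:a2*b2, a2*b3+a3*b2, a3*b3:]"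
    by (simp add: algebra_simps numeral_eq_Suc)
  have d: "degree ([:a0*b0, 0, a0*b2+a2*b0, a0*b3+a3*b0:] :: 'k poly) < degree (([:0,1:]::'k poly)^4)"
    by (simp add: degree_power_eq)
  show ?thesis
    by (simp only: e mod_mult_self2 mod_poly_less[OF d])
qed

lemma deg_small: "([:a,b,c,d:] :: 'k::field poly) mod [:0,1:]^4 = [:a,b,c,d:]"
proof -
  have "degree ([:a,b,c,d:] :: 'k poly) < degree (([:0,1:]::'k poly)^4)"
    by (simp add: degree_power_eq)
  then show ?thesis by (simp add: mod_poly_less)
qed

locale SG =
  fixes scale :: "'k::field_char_0 \<Rightarrow> 'a::comm_ring_1 \<Rightarrow> 'a"
    and G :: "nat \<Rightarrow> 'a set" and n :: nat and B0 :: "'a set"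
  assumes vs: "vector_space scale"
    and smul: "\<And>c x y. scale c (x * y) = scale c x * y"
    and B0: "finite B0" "module.span scale B0 = UNIV"
    and sub: "\<And>i. module.subspace scale (G i)"
    and mulG: "\<And>i j x y. x \<in> G i \<Longrightarrow> y \<in> G j \<Longrightarrow> x * y \<in> G (i + j)"
    and top: "\<And>i. i > n \<Longrightarrow> G i = {0}"
    and dec: "\<And>x. \<exists>!f. (\<forall>i. f i \<in> G i) \<and> x = (\<Sum>i\<le>n. f i)"
    and maxM: "maximal_ideal (irrelevant G)"
    and genM: "irrelevant G = ideal_generated (G 1)"
    and ac: "alg_closed TYPE('k)"
begin

sublocale vector_space scale by (rule vs)

lemma zeroG: "0 \<in> G i" and addG: "x \<in> G i \<Longrightarrow> y \<in> G i \<Longrightarrow> x + y \<in> G i"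
  and scaleG: "x \<in> G i \<Longrightarrow> scale c x \<in> G i"
  using sub[of i] unfolding subspace_def by auto

lemma negG: "x \<in> G i \<Longrightarrow> - x \<in> G i"
  using scaleG[of x i "-1"] by simp

lemma diffG: "x \<in> G i \<Longrightarrow> y \<in> G i \<Longrightarrow> x - y \<in> G i"
  using addG[OF _ negG] by (metis diff_conv_add_uminus)

lemma Gbig: "i > n \<Longrightarrow> x \<in> G i \<Longrightarrow> x = 0"
  using top by auto

definition comp :: "'a \<Rightarrow> nat \<Rightarrow> 'a" where
  "comp x = (THE f. (\<forall>i. f i \<in> G i) \<and> x = (\<Sum>i\<le>n. f i))"

lemma comp: "(\<forall>i. comp x i \<in> G i) \<and> x = (\<Sum>i\<le>n. comp x i)"
  unfolding comp_def by (rule theI'[OF dec])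

lemma compG: "comp x i \<in> G i" using comp by blast

lemma comp_eq: "(\<And>i. f i \<in> G i) \<Longrightarrow> x = (\<Sum>i\<le>n. f i) \<Longrightarrow> comp x = f"
  unfolding comp_def by (rule the1_equality[OF dec]) auto

lemma comp_big: "i > n \<Longrightarrow> comp x i = 0"
  using Gbig compG by blast

lemma sum_ext: assumes "\<And>i. f i \<in> G i" "n \<le> m" shows "(\<Sum>i\<le>m. f i) = (\<Sum>i\<le>n. f i)"
proof (rule sum.mono_neutral_right)
  show "\<forall>i\<in>{..m} - {..n}. f i = 0" using assms Gbig by (metis DiffE atMost_iff not_le)
qed (use assms in auto)

lemma comp_eq_gen:
  assumes f: "\<And>i. f i \<in> G i" and x: "x = (\<Sum>i\<le>m. f i)"
  shows "comp x i = (if i \<le> m then f i else 0)"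
proof -
  define f' where "f' i = (if i \<le> m then f i else 0)" for i
  have f': "f' i \<in> G i" for i using f zeroG by (auto simp: f'_def)
  have "(\<Sum>i\<le>max m n. f' i) = (\<Sum>i\<in>{i\<in>{..max m n}. i \<le> m}. f i)"
    unfolding f'_def by (rule sum.inter_filter[symmetric]) simp
  also have "{i\<in>{..max m n}. i \<le> m} = {..m}" by auto
  finally have "x = (\<Sum>i\<le>max m n. f' i)" using x by simp
  also have "\<dots> = (\<Sum>i\<le>n. f' i)" by (rule sum_ext[OF f']) simp
  finally have "comp x = f'" by (rule comp_eq[OF f', rotated])
  then show ?thesis by (simp add: f'_def)
qed

lemma recon: "n \<le> m \<Longrightarrow> x = (\<Sum>i\<le>m. comp x i)"
  using comp sum_ext compG by metis

lemma comp_add: "comp (x + y) i = comp x i + comp y i"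
proof -
  have "comp (x + y) = (\<lambda>i. comp x i + comp y i)"
    by (rule comp_eq) (use addG compG comp in \<open>auto simp: sum.distrib\<close>)
  then show ?thesis by simp
qed

lemma comp_scale: "comp (scale c x) i = scale c (comp x i)"
proof -
  have "comp (scale c x) = (\<lambda>i. scale c (comp x i))"
  proof (rule comp_eq)
    have "x = (\<Sum>i\<le>n. comp x i)" using comp by blast
    then have "scale c x = scale c (\<Sum>i\<le>n. comp x i)" by (rule arg_cong)
    then show "scale c x = (\<Sum>i\<le>n. scale c (comp x i))" by (simp add: scale_sum_right)
  qed (use scaleG compG in auto)
  then show ?thesis by simp
qed

lemma comp_zero: "comp 0 i = 0"
  using comp_scale[of 0 0 i] by simp

lemma comp_neg: "comp (- x) i = - comp x i"
  using comp_scale[of "-1" x i] by simp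

lemma comp_diff: "comp (x - y) i = comp x i - comp y i"
  by (metis comp_add comp_neg diff_conv_add_uminus)

lemma comp_hom: "x \<in> G j \<Longrightarrow> comp x i = (if i = j then x else 0)"
  using comp_eq_gen[of "\<lambda>i. if i = j then x else 0" x j i] zeroG by auto

lemma comp_sum: "finite S \<Longrightarrow> comp (sum g S) i = (\<Sum>s\<in>S. comp (g s) i)"
  by (induction S rule: finite_induct) (auto simp: comp_zero comp_add)

lemma comp_mult: "comp (x * y) j = (\<Sum>a\<le>j. comp x a * comp y (j - a))"
proof -
  define m where "m = n + j"
  have "x * y = (\<Sum>a\<le>m. comp x a) * (\<Sum>b\<le>m. comp y b)"
    using recon[of m] by (metis le_add1 m_def)
  also have "\<dots> = (\<Sum>a\<le>m. \<Sum>b\<le>m. comp x a * comp y b)"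
    by (simp add: sum_product)
  finally have "comp (x * y) j = (\<Sum>a\<le>m. \<Sum>b\<le>m. comp (comp x a * comp y b) j)"
    by (simp add: comp_sum)
  also have "\<dots> = (\<Sum>a\<le>m. \<Sum>b\<le>m. if a \<le> j then (if b = j - a then comp x a * comp y b else 0) else 0)"
    by (intro sum.cong refl) (auto simp: comp_hom[OF mulG[OF compG compG]])
  also have "\<dots> = (\<Sum>a\<le>m. if a \<le> j then comp x a * comp y (j - a) else 0)"
    by (intro sum.cong refl) (auto simp: m_def)
  also have "\<dots> = (\<Sum>a\<in>{a\<in>{..m}. a \<le> j}. comp x a * comp y (j - a))"
    by (rule sum.inter_filter[symmetric]) simp
  also have "{a\<in>{..m}. a \<le> j} = {..j}" by (auto simp: m_def)
  finally show ?thesis .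
qed

lemma comp_mult0: "comp (x * y) 0 = comp x 0 * comp y 0"
  by (simp add: comp_mult)

lemma comp_mult1: "comp (x * y) 1 = comp x 0 * comp y 1 + comp x 1 * comp y 0"
  by (simp add: comp_mult)

lemma one_G0: "1 \<in> G 0"
proof -
  define e where "e = comp 1 0"
  have hom: "e * y = y" if "y \<in> G j" for y j
  proof -
    have "y = comp (1 * y) j" using comp_hom[OF that] by simp
    also have "\<dots> = (\<Sum>a\<le>j. comp 1 a * comp y (j - a))"
      by (rule comp_mult)
    also have "\<dots> = (\<Sum>a\<le>j. if a = 0 then comp 1 a * y else 0)"
      by (intro sum.cong refl) (auto simp: comp_hom[OF that])
    also have "\<dots> = e * y" by (simp add: e_def)
    finally show ?thesis by simp
  qed
  have "e * x = x" for x
  proof -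
    have "e * x = (\<Sum>i\<le>n. e * comp x i)"
      using recon[of n x] by (metis order_refl sum_distrib_left)
    also have "\<dots> = (\<Sum>i\<le>n. comp x i)" using hom[OF compG] by simp
    finally show ?thesis using recon[of n x] by simp
  qed
  from this[of 1] have "e = 1" by simp
  then show ?thesis using compG e_def by metis
qed

lemma comp_one: "comp 1 i = (if i = 0 then 1 else 0)"
  by (simp add: comp_hom[OF one_G0])


definition iota :: "'k \<Rightarrow> 'a" where "iota c = scale c 1"

lemma iota_G0: "iota c \<in> G 0" unfolding iota_def by (rule scaleG[OF one_G0])

lemma scale_iota: "scale c x = iota c * x"
  using smul[of c 1 x] by (simp add: iota_def)

lemma iota_add: "iota (c + d) = iota c + iota d" by (simp add: iota_def scale_left_distrib)
lemma iota_mult: "iota (c * d) = iota c * iota d" unfolding iota_def by (metis scale_scale smul mult_1)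
lemma iota_0 [simp]: "iota 0 = 0" by (simp add: iota_def)
lemma iota_1 [simp]: "iota 1 = 1" by (simp add: iota_def)
lemma iota_neg: "iota (- c) = - iota c" by (simp add: iota_def)
lemma iota_diff: "iota (c - d) = iota c - iota d" by (simp add: iota_def scale_left_diff_distrib)
lemma iota_inj [simp]: "iota c = iota d \<longleftrightarrow> c = d" by (simp add: iota_def)
lemma iota_eq0 [simp]: "iota c = 0 \<longleftrightarrow> c = 0" using iota_inj[of c 0] by simp

lemma M_eq: "irrelevant G = {x. comp x 0 = 0}"
proof safe
  fix x assume "x \<in> irrelevant G"
  then obtain f m where f: "\<forall>i. f i \<in> G i" "f 0 = 0" "x = (\<Sum>i\<le>m. f i)"
    unfolding irrelevant_def by blast
  show "comp x 0 = 0" using comp_eq_gen[of f x m 0] f by auto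
next
  fix x assume "comp x 0 = 0"
  then show "x \<in> irrelevant G" unfolding irrelevant_def using comp[of x] by blast
qed

lemma M_ideal: "is_ideal (irrelevant G)" using maxM unfolding maximal_ideal_def by blast

lemma inv_G0: assumes a: "a \<in> G 0" "a \<noteq> 0" shows "\<exists>b\<in>G 0. b * a = 1"
proof -
  let ?M = "irrelevant G"
  define J where "J = {m + r * a | m r. m \<in> ?M}"
  have MJ: "?M \<subseteq> J"
  proof
    fix x assume "x \<in> ?M"
    then have "x = x + 0 * a \<and> x \<in> ?M" by simp
    then show "x \<in> J" unfolding J_def by blast
  qed
  have aJ: "a \<in> J" unfolding J_def using M_ideal unfolding is_ideal_def
    by (metis (mono_tags, lifting) add_0 mem_Collect_eq mult_1)
  have aM: "a \<notin> ?M" using a comp_hom[OF a(1)] by (simp add: M_eq)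
  have "is_ideal J"
    unfolding is_ideal_def
  proof safe
    show "0 \<in> J" using MJ M_ideal unfolding is_ideal_def by blast
  next
    fix x y assume "x \<in> J" "y \<in> J"
    then obtain m1 r1 m2 r2 where "x = m1 + r1 * a" "y = m2 + r2 * a" "m1 \<in> ?M" "m2 \<in> ?M"
      unfolding J_def by blast
    moreover have "m1 + m2 \<in> ?M" using M_ideal \<open>m1 \<in> ?M\<close> \<open>m2 \<in> ?M\<close> unfolding is_ideal_def by blast
    moreover have "x + y = (m1 + m2) + (r1 + r2) * a" using calculation by (simp add: algebra_simps)
    ultimately show "x + y \<in> J" unfolding J_def by blast
  next
    fix r x assume "x \<in> J"
    then obtain m1 r1 where "x = m1 + r1 * a" "m1 \<in> ?M" unfolding J_def by blast
    moreover have "r * m1 \<in> ?M" using M_ideal \<open>m1 \<in> ?M\<close> unfolding is_ideal_def by blast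
    moreover have "r * x = (r * m1) + (r * r1) * a" using calculation by (simp add: algebra_simps)
    ultimately show "r * x \<in> J" unfolding J_def by blast
  qed
  then have "J = UNIV" using maxM MJ aJ aM unfolding maximal_ideal_def by blast
  then obtain m r where mr: "1 = m + r * a" "m \<in> ?M" unfolding J_def by blast
  have "1 = comp 1 0" by (simp add: comp_one)
  also have "\<dots> = comp (m + r * a) 0" using mr(1) by simp
  also have "\<dots> = comp m 0 + comp r 0 * comp a 0" by (simp add: comp_add comp_mult0)
  also have "\<dots> = comp r 0 * a" using mr(2) comp_hom[OF a(1)] by (simp add: M_eq)
  finally show ?thesis using compG by metis
qed

lemma coeff_map_iota: "coeff (map_poly iota p) k = iota (coeff p k)"
  by (simp add: coeff_map_poly)

lemma map_diff: "map_poly iota (p - q) = map_poly iota p - map_poly iota q"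
  by (rule poly_eqI) (simp add: coeff_map_iota iota_diff)

lemma map_lin: "map_poly iota ([:-c, 1:] * q) = [:-iota c, 1:] * map_poly iota q"
  by (rule poly_eqI) (auto simp: coeff_map_iota coeff_pCons iota_add iota_mult iota_neg iota_diff split: nat.split)

lemma annih: "\<exists>p. p \<noteq> 0 \<and> poly (map_poly iota p) a = 0"
proof (cases "inj_on (\<lambda>i. a ^ i) {..card B0}")
  case False
  then obtain i j where ij: "i \<noteq> j" "a ^ i = a ^ j" unfolding inj_on_def by blast
  define p :: "'k poly" where "p = monom 1 i - monom 1 j"
  have "coeff p i = 1" using ij by (simp add: p_def)
  then have "p \<noteq> 0" by auto
  moreover have "poly (map_poly iota p) a = 0"
    by (simp add: p_def map_diff map_poly_monom poly_monom ij)
  ultimately show ?thesis by blast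
next
  case True
  define d where "d = card B0"
  define S where "S = (\<lambda>i. a ^ i) ` {..d}"
  have cS: "card S = d + 1" using True by (simp add: S_def d_def card_image)
  have fS: "finite S" by (simp add: S_def)
  have "dependent S"
  proof (rule ccontr)
    assume "\<not> dependent S"
    then have "card S \<le> card B0" using independent_span_bound[OF B0(1), of S] B0(2) by auto
    then show False using cS d_def by simp
  qed
  then obtain u v where uv: "v \<in> S" "u v \<noteq> 0" "(\<Sum>v\<in>S. scale (u v) v) = 0"
    using dependent_finite[OF fS] by blast
  define p :: "'k poly" where "p = (\<Sum>i\<le>d. monom (u (a ^ i)) i)"
  have cp: "coeff p k = (if k \<le> d then u (a ^ k) else 0)" for k
    by (simp add: p_def coeff_sum coeff_monom)
  obtain i0 where i0: "i0 \<le> d" "v = a ^ i0" using uv(1) S_def by auto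
  have "coeff p i0 \<noteq> 0" using cp[of i0] i0 uv(2) by simp
  then have "p \<noteq> 0" by auto
  have "map_poly iota p = (\<Sum>i\<le>d. monom (iota (u (a ^ i))) i)"
    by (rule poly_eqI) (simp add: coeff_map_iota cp coeff_sum coeff_monom)
  then have "poly (map_poly iota p) a = (\<Sum>i\<le>d. scale (u (a ^ i)) (a ^ i))"
    by (simp add: poly_sum poly_monom scale_iota)
  also have "\<dots> = (\<Sum>v\<in>S. scale (u v) v)"
    unfolding S_def using True d_def by (simp add: sum.reindex)
  also have "\<dots> = 0" by (rule uv(3))
  finally show ?thesis using \<open>p \<noteq> 0\<close> by blast
qed

lemma descent: "p \<noteq> 0 \<Longrightarrow> poly (map_poly iota p) a = 0 \<Longrightarrow> a \<in> G 0 \<Longrightarrow> \<exists>c. a = iota c"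
proof (induction "degree p" arbitrary: p rule: less_induct)
  case less
  show ?case
  proof (cases "degree p = 0")
    case True
    then obtain c0 where "p = [:c0:]" using degree_eq_zeroE by blast
    then show ?thesis using less.prems by (simp add: map_poly_pCons)
  next
    case False
    then obtain c where "poly p c = 0" using ac unfolding alg_closed_def by force
    then obtain q where q: "p = [:-c, 1:] * q" using poly_eq_0_iff_dvd by (metis dvdE)
    have q0: "q \<noteq> 0" using q less.prems by auto
    have "[:-c, 1::'k:] \<noteq> 0" by simp
    then have "degree p = degree [:-c, 1::'k:] + degree q" using degree_mult_eq[OF _ q0] q by metis
    then have dq: "degree q < degree p" by simp
    have "(a - iota c) * poly (map_poly iota q) a = 0"
      using less.prems(2) unfolding q map_lin by (simp add: algebra_simps)
    show ?thesis
    proof (cases "a = iota c")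
      case False
      then obtain b where "b \<in> G 0" "b * (a - iota c) = 1"
        using inv_G0[of "a - iota c"] diffG[OF less.prems(3) iota_G0] by auto
      then have "poly (map_poly iota q) a = 0"
        using \<open>(a - iota c) * poly (map_poly iota q) a = 0\<close> by (metis mult.assoc mult_1 mult_zero_right)
      then show ?thesis using less.hyps[OF dq q0 _ less.prems(3)] by blast
    qed blast
  qed
qed

lemma G0_scalar: "a \<in> G 0 \<Longrightarrow> \<exists>c. a = iota c"
  using annih descent by blast

definition lam :: "'a \<Rightarrow> 'k" where "lam a = (THE c. a = iota c)"

lemma lam_iota [simp]: "lam (iota c) = c" unfolding lam_def by auto

lemma iota_lam: "a \<in> G 0 \<Longrightarrow> iota (lam a) = a"
  by (metis G0_scalar lam_iota)


lemma xpow: "x \<in> G 1 \<Longrightarrow> x ^ i \<in> G i"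
  by (induction i) (auto simp: one_G0 dest: mulG)

lemma xnil: "x \<in> G 1 \<Longrightarrow> x ^ Suc n = 0"
  by (metis Gbig lessI xpow)

lemma pia:
  assumes x: "x \<in> G 1" and G1: "G 1 \<subseteq> range (\<lambda>c. scale c x)"
  shows "principal_ideal_ring TYPE('a)"
proof -
  let ?X = "{r * x | r. True}"
  have i1: "0 \<in> ?X" by (metis (mono_tags, lifting) mem_Collect_eq mult_zero_left)
  have i2: "a + b \<in> ?X" if "a \<in> ?X" "b \<in> ?X" for a b
    using that by (auto, metis distrib_right)
  have i3: "r * a \<in> ?X" if "a \<in> ?X" for a r
    using that by (auto, metis mult.assoc)
  have idl: "is_ideal ?X" unfolding is_ideal_def using i1 i2 i3 by blast
  have subX: "G 1 \<subseteq> ?X" using G1 scale_iota by blast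
  have Mx: "irrelevant G = ?X"
  proof
    show "irrelevant G \<subseteq> ?X" unfolding genM ideal_generated_def using idl subX by blast
  next
    show "?X \<subseteq> irrelevant G" unfolding genM ideal_generated_def
    proof safe
      fix r I assume "is_ideal I" "G 1 \<subseteq> I"
      then show "r * x \<in> I" using x unfolding is_ideal_def by blast
    qed
  qed
  have decomp: "\<exists>c s. a = iota c + s * x" for a
  proof -
    have "comp (a - comp a 0) 0 = 0" by (simp add: comp_diff comp_hom[OF compG])
    then have "a - comp a 0 \<in> ?X" using Mx M_eq by blast
    then obtain s where "a - comp a 0 = s * x" by blast
    then have "a = iota (lam (comp a 0)) + s * x" using iota_lam[OF compG] by (simp add: algebra_simps)
    then show ?thesis by blast
  qed
  have unit: "\<exists>w. (iota c + s * x) * w = 1" if c: "c \<noteq> 0" for c s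
  proof -
    define z where "z = iota (inverse c) * s * x"
    have "z ^ Suc n = (iota (inverse c) * s) ^ Suc n * x ^ Suc n" unfolding z_def by (simp add: power_mult_distrib)
    then have z0: "z ^ Suc n = 0" using xnil[OF x] by simp
    have "(-z) ^ Suc n = (- 1) ^ Suc n * z ^ Suc n" by (rule power_minus)
    then have "(-z) ^ Suc n = 0" using z0 by simp
    then have gz: "(1 + z) * (\<Sum>i<Suc n. (-z) ^ i) = 1"
      using one_diff_power_eq[of "-z" "Suc n"] by simp
    have ci: "iota c * iota (inverse c) = 1" using c by (simp flip: iota_mult)
    have "iota c + s * x = iota c * (1 + z)"
      unfolding z_def by (simp add: algebra_simps ci flip: mult.assoc)
    then have "(iota c + s * x) * (iota (inverse c) * (\<Sum>i<Suc n. (-z) ^ i)) = 1"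
      using gz ci by (metis (no_types, lifting) mult.assoc mult.left_commute mult_1_right)
    then show ?thesis by blast
  qed
  have key: "(\<exists>r. a = r * x ^ j) \<or> (\<exists>v u w. a = x ^ v * u \<and> u * w = 1)" for j a
  proof (induction j)
    case 0 show ?case by (rule disjI1, rule exI[of _ a]) simp
  next
    case (Suc j)
    show ?case using Suc
    proof
      assume "\<exists>r. a = r * x ^ j"
      then obtain r where r: "a = r * x ^ j" by blast
      obtain c s where cs: "r = iota c + s * x" using decomp by blast
      show ?case
      proof (cases "c = 0")
        case True
        then have "a = s * x ^ Suc j" using r cs by (simp add: algebra_simps)
        then show ?thesis by blast
      next
        case False
        then obtain w where "(iota c + s * x) * w = 1" using unit by blast
        moreover have "a = x ^ j * (iota c + s * x)" using r cs by (simp add: algebra_simps)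
        ultimately show ?thesis by blast
      qed
    qed blast
  qed
  have nz: "\<exists>v u w. a = x ^ v * u \<and> u * w = 1" if "a \<noteq> 0" for a
    using key[of a "Suc n"] that xnil[OF x] by auto
  show ?thesis unfolding principal_ideal_ring_def
  proof (intro allI impI)
    fix I :: "'a set" assume I: "is_ideal I"
    show "\<exists>a. I = {r * a |r. True}"
    proof (cases "I \<subseteq> {0}")
      case True
      then have "I = {r * 0 | r. True}" using I unfolding is_ideal_def by auto
      then show ?thesis by blast
    next
      case False
      then obtain a where a: "a \<in> I" "a \<noteq> 0" by blast
      then obtain v u w where vuw: "a = x ^ v * u" "u * w = 1" using nz by blast
      have "w * a \<in> I" using I a unfolding is_ideal_def by blast
      moreover have "w * a = x ^ v" using vuw by (metis mult.commute mult.left_commute mult_1_right)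
      ultimately have ex: "x ^ v \<in> I" by simp
      define v0 where "v0 = (LEAST v. x ^ v \<in> I)"
      have v0: "x ^ v0 \<in> I" unfolding v0_def using ex by (rule LeastI)
      have "I = {r * x ^ v0 | r. True}"
      proof
        show "{r * x ^ v0 | r. True} \<subseteq> I" using v0 I unfolding is_ideal_def by blast
      next
        show "I \<subseteq> {r * x ^ v0 | r. True}"
        proof
          fix b assume b: "b \<in> I"
          show "b \<in> {r * x ^ v0 | r. True}"
          proof (cases "b = 0")
            case True then show ?thesis by (metis (mono_tags, lifting) mem_Collect_eq mult_zero_left)
          next
            case False
            then obtain v' u' w' where vuw': "b = x ^ v' * u'" "u' * w' = 1" using nz by blast
            have "w' * b \<in> I" using I b unfolding is_ideal_def by blast
            moreover have "w' * b = x ^ v'" using vuw' by (metis mult.commute mult.left_commute mult_1_right)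
            ultimately have "x ^ v' \<in> I" by simp
            then have "v0 \<le> v'" unfolding v0_def by (rule Least_le)
            then have "b = (x ^ (v' - v0) * u') * x ^ v0" using vuw'
              by (simp add: algebra_simps flip: power_add)
            then show ?thesis by blast
          qed
        qed
      qed
      then show ?thesis by blast
    qed
  qed
qed

lemma two_indep:
  assumes "\<not> principal_ideal_ring TYPE('a)"
  shows "\<exists>x y. x \<in> G 1 \<and> y \<in> G 1 \<and> x \<noteq> y \<and> independent {x, y}"
proof -
  obtain B where B: "B \<subseteq> G 1" "independent B" "G 1 \<subseteq> span B"
    using maximal_independent_subset by blast
  show ?thesis
  proof (cases "\<exists>x\<in>B. \<exists>y\<in>B. x \<noteq> y")
    case True
    then obtain x y where "x \<in> B" "y \<in> B" "x \<noteq> y" by blast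
    then show ?thesis using B independent_mono[OF B(2), of "{x, y}"] by blast
  next
    case False
    obtain x where x: "x \<in> G 1" "B \<subseteq> {x}"
    proof (cases "B = {}")
      case True then show ?thesis using that zeroG by blast
    next
      case False
      then obtain x where "x \<in> B" by blast
      then show ?thesis using that \<open>\<not> (\<exists>x\<in>B. \<exists>y\<in>B. x \<noteq> y)\<close> B(1) by blast
    qed
    have "G 1 \<subseteq> span {x}" using B(3) span_mono[OF x(2)] by blast
    then have "G 1 \<subseteq> range (\<lambda>c. scale c x)" by (simp add: span_singleton)
    then show ?thesis using pia[OF x(1)] assms by blast
  qed
qed


lemma lam_add: "u \<in> G 0 \<Longrightarrow> v \<in> G 0 \<Longrightarrow> lam (u + v) = lam u + lam v"
  by (metis iota_add iota_lam lam_iota)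
lemma lam_scale: "u \<in> G 0 \<Longrightarrow> lam (scale c u) = c * lam u"
  by (metis iota_lam iota_mult lam_iota scale_iota)
lemma lam_mult: "u \<in> G 0 \<Longrightarrow> v \<in> G 0 \<Longrightarrow> lam (u * v) = lam u * lam v"
  by (metis iota_lam iota_mult lam_iota)
lemma lam_0 [simp]: "lam 0 = 0" using lam_iota[of 0] by simp
lemma lam_1 [simp]: "lam 1 = 1" using lam_iota[of 1] by simp

lemma main:
  assumes npi: "\<not> principal_ideal_ring TYPE('a)"
  shows "finite {i::nat. \<exists>N \<alpha>. trunc_hom scale N \<alpha> \<and>
                   vector_space.dim (smult :: 'k \<Rightarrow> 'k poly \<Rightarrow> 'k poly) (\<alpha> ` G i) \<ge> 2}
       \<and> {i::nat. \<exists>N \<alpha>. trunc_hom scale N \<alpha> \<and>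
                   vector_space.dim (smult :: 'k \<Rightarrow> 'k poly \<Rightarrow> 'k poly) (\<alpha> ` G i) \<ge> 2} \<noteq> {}"
    (is "finite ?E \<and> ?E \<noteq> {}")
proof
  show "finite ?E"
  proof (rule finite_subset)
    show "?E \<subseteq> {..n}"
    proof
      fix i assume "i \<in> ?E"
      then obtain N \<alpha> where h: "trunc_hom scale N \<alpha>" "2 \<le> PV.dim (\<alpha> ` G i)" by blast
      have "\<alpha> 0 = \<alpha> 0 + \<alpha> 0" using h(1) unfolding trunc_hom_def by (metis add_0)
      then have a0: "\<alpha> 0 = 0" by simp
      show "i \<in> {..n}"
      proof (rule ccontr)
        assume "i \<notin> {..n}"
        then have "\<alpha> ` G i = {0}" using top[of i] a0 by auto
        moreover have "PV.dim {0::'k poly} \<le> card ({} :: 'k poly set)"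
          by (rule PV.dim_le_card) auto
        ultimately show False using h(2) by simp
      qed
    qed
  qed simp
next
  obtain x y where xy: "x \<in> G 1" "y \<in> G 1" "x \<noteq> y" "independent {x, y}"
    using two_indep[OF npi] by blast
  define E where "E = extend_basis {x, y}"
  have indE: "independent E" and spE: "span E = UNIV"
    using xy(4) by (auto simp: E_def independent_extend_basis)
  have xyE: "{x, y} \<subseteq> E" using extend_basis_superset[OF xy(4)] by (simp add: E_def)
  define phi where "phi b a = representation E a b" for b a
  have phi_add: "phi b (u + v) = phi b u + phi b v" for b u v
    unfolding phi_def using representation_add[OF indE] spE by simp
  have phi_scale: "phi b (scale c u) = c * phi b u" for b c u
    unfolding phi_def using representation_scale[OF indE] spE by simp
  have phi_zero: "phi b 0 = 0" for b unfolding phi_def by (simp add: representation_zero)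
  have phix: "phi x x = 1" "phi y x = 0" and phiy: "phi x y = 0" "phi y y = 1"
    unfolding phi_def using representation_basis[OF indE] xyE xy(3) by auto
  define \<alpha> where "\<alpha> a = [:lam (comp a 0), 0, phi x (comp a 1), phi y (comp a 1):]" for a
  have th: "trunc_hom scale 3 \<alpha>"
    unfolding trunc_hom_def
  proof (intro conjI allI)
    fix a show "\<alpha> a mod [:0, 1:] ^ (3 + 1) = \<alpha> a" unfolding \<alpha>_def using deg_small by simp
  next
    fix a b show "\<alpha> (a + b) = \<alpha> a + \<alpha> b"
      unfolding \<alpha>_def by (simp add: comp_add lam_add[OF compG compG] phi_add)
  next
    fix c a show "\<alpha> (scale c a) = smult c (\<alpha> a)"
      unfolding \<alpha>_def by (simp add: comp_scale lam_scale[OF compG] phi_scale)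
  next
    show "\<alpha> 1 = 1" unfolding \<alpha>_def by (simp add: comp_one phi_zero)
  next
    fix a b
    define a0 where "a0 = lam (comp a 0)"
    define b0 where "b0 = lam (comp b 0)"
    have ca: "comp a 0 = iota a0" and cb: "comp b 0 = iota b0"
      using iota_lam[OF compG] a0_def b0_def by auto
    have c0: "comp (a * b) 0 = iota (a0 * b0)" by (simp add: comp_mult0 ca cb iota_mult)
    have c1: "comp (a * b) 1 = scale a0 (comp b 1) + scale b0 (comp a 1)"
      by (simp only: comp_mult1 ca cb scale_iota mult.commute[of "comp a 1"])
    have e1: "\<alpha> (a * b) = [:a0 * b0, 0, a0 * phi x (comp b 1) + phi x (comp a 1) * b0,
        a0 * phi y (comp b 1) + phi y (comp a 1) * b0:]"
      unfolding \<alpha>_def c0 c1 phi_add phi_scale lam_iota by (simp only: mult.commute)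
    have e2: "(\<alpha> a * \<alpha> b) mod [:0, 1:] ^ 4 = [:a0 * b0, 0, a0 * phi x (comp b 1) + phi x (comp a 1) * b0,
        a0 * phi y (comp b 1) + phi y (comp a 1) * b0:]"
      unfolding \<alpha>_def a0_def[symmetric] b0_def[symmetric] by (rule poly_prod_trunc)
    have e3: "(3 + 1 :: nat) = 4" by simp
    show "\<alpha> (a * b) = (\<alpha> a * \<alpha> b) mod [:0, 1:] ^ (3 + 1)"
      unfolding e3 e2 e1 ..
  qed
  have ax: "\<alpha> x = [:0, 0, 1:]" unfolding \<alpha>_def using xy(1) by (simp add: comp_hom phix)
  have ay: "\<alpha> y = [:0, 0, 0, 1:]" unfolding \<alpha>_def using xy(2) by (simp add: comp_hom phiy)
  define V where "V = \<alpha> ` G 1"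
  define T :: "'k poly set" where "T = {[:1:], [:0, 0, 1:], [:0, 0, 0, 1:]}"
  have VT: "V \<subseteq> PV.span T"
  proof
    fix p assume "p \<in> V"
    then obtain a where "p = \<alpha> a" unfolding V_def by blast
    then have "p = smult (lam (comp a 0)) [:1:] + smult (phi x (comp a 1)) [:0, 0, 1:] + smult (phi y (comp a 1)) [:0, 0, 0, 1:]"
      unfolding \<alpha>_def by simp
    moreover have s1: "[:1:] \<in> PV.span T" "[:0, 0, 1:] \<in> PV.span T" "[:0, 0, 0, 1:] \<in> PV.span T"
      by (auto simp: T_def intro: PV.span_base)
    ultimately show "p \<in> PV.span T"
      by (metis PV.span_add PV.span_scale)
  qed
  obtain Bb where Bb: "Bb \<subseteq> V" "PV.independent Bb" "V \<subseteq> PV.span Bb" "card Bb = PV.dim V"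
    using PV.basis_exists by blast
  have fBb: "finite Bb" using PV.independent_span_bound[of T Bb] Bb VT by (auto simp: T_def)
  have pq: "{[:0, 0, 1:], [:0, 0, 0, 1:]} \<subseteq> V" using ax ay xy(1,2) unfolding V_def by (metis empty_subsetI image_eqI insert_subset)
  have "PV.independent {[:0, 0, 1:], [:0, 0, 0, 1::'k:]}"
  proof -
    have "[:0, 0, 1:] \<notin> PV.span {[:0, 0, 0, 1::'k:]}"
    proof
      assume "[:0, 0, 1:] \<in> PV.span {[:0, 0, 0, 1::'k:]}"
      then obtain k where "[:0, 0, 1:] = smult k [:0, 0, 0, 1::'k:]" by (auto simp: PV.span_singleton)
      then show False by simp
    qed
    then show ?thesis by (simp add: PV.independent_insert)
  qed
  then have "card {[:0, 0, 1:], [:0, 0, 0, 1::'k:]} \<le> card Bb"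
    using PV.independent_span_bound[OF fBb] pq Bb(3) by blast
  then have "2 \<le> PV.dim V" using Bb(4) by simp
  then have "1 \<in> ?E" using th V_def by blast
  then show "?E \<noteq> {}" by blast
qed

end

theorem lemma2p3:
  fixes scale :: "'k::field_char_0 \<Rightarrow> 'a::comm_ring_1 \<Rightarrow> 'a"
    and G :: "nat \<Rightarrow> 'a set"
  assumes "alg_closed TYPE('k)"
    and "fd_algebra scale"
    and "standard_graded scale G"
    and "\<not> principal_ideal_ring TYPE('a)"
  shows "finite {i::nat. \<exists>N \<alpha>. trunc_hom scale N \<alpha> \<and>
                   vector_space.dim (smult :: 'k \<Rightarrow> 'k poly \<Rightarrow> 'k poly) (\<alpha> ` G i) \<ge> 2}
       \<and> {i::nat. \<exists>N \<alpha>. trunc_hom scale N \<alpha> \<and>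
                   vector_space.dim (smult :: 'k \<Rightarrow> 'k poly \<Rightarrow> 'k poly) (\<alpha> ` G i) \<ge> 2} \<noteq> {}"
proof -
  obtain B0 where vs: "vector_space scale" and sm: "\<forall>c x y. scale c (x * y) = scale c x * y"
    and B0: "finite B0" "module.span scale B0 = UNIV"
    using assms(2) unfolding fd_algebra_def by blast
  obtain n where gr: "\<forall>i. module.subspace scale (G i)" "\<forall>i j. \<forall>x\<in>G i. \<forall>y\<in>G j. x * y \<in> G (i + j)"
    "\<forall>i>n. G i = {0}" "\<forall>x. \<exists>!f. (\<forall>i. f i \<in> G i) \<and> x = (\<Sum>i\<le>n. f i)"
    and mx: "maximal_ideal (irrelevant G)" "irrelevant G = ideal_generated (G 1)"
    using assms(3) unfolding standard_graded_def graded_def by blast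
  interpret SG scale G n B0
    by (intro SG.intro) (use vs sm B0 gr mx assms(1) in auto)
  show ?thesis by (rule main[OF assms(4)])
qed

end
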